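(* Let $s \geq 2$ and let $b_1,\dots,b_s \geq 2$ be pairwise coprime integers, $B = b_1\cdots b_s$, $B^{(i)} = B/b_i$, and $\tau_i = \min\{1 \leq k < B^{(i)} : b_i^k \equiv 1 \pmod{B^{(i)}}\}$ for $i=1,\dots,s$. Let $m \geq B$ be an integer, $y_i = \sum_{j=1}^m b_i^{-j\tau_i}$ and $\boldsymbol{y} = (y_1,\dots,y_s)$. For a vector $\boldsymbol{r} = (r_1,\dots,r_s)$ of positive integers put $B_{\boldsymbol{r}} = \prod_{i=1}^s b_i^{r_i}$ and let $M_{i,\boldsymbol{r}}$ be an integer with $M_{i,\boldsymbol{r}}\, (B_{\boldsymbol{r}} b_i^{-r_i}) \equiv 1 \pmod{b_i^{r_i}}$. For $\boldsymbol{k} = (k_1,\dots,k_s) \in \{1,\dots,m\}^s$ write $\boldsymbol{\tau}\cdot\boldsymbol{k} = (\tau_1k_1,\dots,\tau_sk_s)$, and for an integer $\ell\ge1$ write $\boldsymbol{\tau}\ell = (\tau_1\ell,\dots,\tau_s\ell)$. Let $A_{\boldsymbol{k}} \in [0, B_{\boldsymbol{\tau}\cdot\boldsymbol{k}})$ be the integer with \[ A_{\boldsymbol{k}} \equiv -\sum_{i=1}^s M_{i,\boldsymbol{\tau}\cdot\boldsymbol{k}}\, B_{\boldsymbol{\tau}\cdot\boldsymbol{k}}\, b_i^{-1} \pmod{B_{\boldsymbol{\tau}\cdot\boldsymbol{k}}}, \] and let $\tilde{y}_m \in [0, B_{\boldsymbol{\tau}(m+1)})$ be the integer with \[ \tilde{y}_m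 \equiv \sum_{i=1}^s M_{i,\boldsymbol{\tau}(m+1)}\, B_{\boldsymbol{\tau}(m+1)}\, b_i^{-\tau_i(m+1)} \sum_{j=1}^{m+1} b_i^{j\tau_i - 1} \pmod{B_{\boldsymbol{\tau}(m+1)}}. \] Define \[ \alpha_m := \frac{1}{B_{\boldsymbol{\tau}m}} \sum_{N=1}^{B_{\boldsymbol{\tau}m}} \Delta\big(\boldsymbol{y},(H_s(n))_{n=\tilde{y}_m}^{\tilde{y}_m + N -1}\big). \] Then \[ \alpha_m = \sum_{1 \leq k_1, \ldots, k_s \leq m} \Big(\frac{1}{2} - \frac{A_{\boldsymbol{k}}}{B_{\boldsymbol{\tau} \cdot \boldsymbol{k}}}-\frac{1}{2 B_{\boldsymbol{\tau} \cdot \boldsymbol{k}}}\Big). \]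
   Context: For an integer $b \geq 2$, the radical inverse function is $\phi_b(n) = \sum_{j\geq 0} n_j b^{-j-1}$ where $n=\sum_{j\ge0} n_j b^j$, $n_j\in\{0,\dots,b-1\}$. The $s$-dimensional Halton sequence in bases $b_1,\dots,b_s$ is $H_s(n) = (\phi_{b_1}(n),\dots,\phi_{b_s}(n))$, $n\in\mathbb{N}_0$. For integers $a \geq 0$, $N\geq1$ and $\boldsymbol{y}=(y_1,\dots,y_s)$, $\Delta(\boldsymbol{y},(H_s(n))_{n=a}^{a+N-1}) = \sum_{n=a}^{a+N-1}\big(\chi_{[0,y_1)\times\cdots\times[0,y_s)}(H_s(n)) - y_1\cdots y_s\big)$. *)

theory Defs
  imports Complex_Main "HOL-Library.FuncSet" "HOL-Number_Theory.Cong"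
begin

text \<open>Indices are 0-based: the bases are b 0, ..., b (s-1).\<close>

text \<open>Radical inverse in base b: sum of digits n_j b^(-j-1). The digits n_j = (n div b^j) mod b
  vanish for j > n (as b >= 2), so the sum over j <= n is the full digit sum.\<close>
definition radinv :: "nat \<Rightarrow> nat \<Rightarrow> real" where
  "radinv b n = (\<Sum>j\<le>n. real ((n div b ^ j) mod b) / real b ^ (j + 1))"

definition halton :: "(nat \<Rightarrow> nat) \<Rightarrow> nat \<Rightarrow> nat \<Rightarrow> real" where
  "halton b n i = radinv (b i) n"

definition discr :: "nat \<Rightarrow> (nat \<Rightarrow> nat) \<Rightarrow> (nat \<Rightarrow> real) \<Rightarrow> nat \<Rightarrow> nat \<Rightarrow> real" where
  "discr s b y a N =
     (\<Sum>n\<in>{a..<a+N}. (if (\<forall>i<s. 0 \<le> halton b n i \<and> halton b n i < y i) then 1 else 0)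
                      - (\<Prod>i<s. y i))"

definition Bvec :: "nat \<Rightarrow> (nat \<Rightarrow> nat) \<Rightarrow> (nat \<Rightarrow> nat) \<Rightarrow> nat" where
  "Bvec s b r = (\<Prod>i<s. b i ^ r i)"

definition Bhat :: "nat \<Rightarrow> (nat \<Rightarrow> nat) \<Rightarrow> nat \<Rightarrow> nat" where
  "Bhat s b i = (\<Prod>j<s. b j) div b i"

definition tau :: "nat \<Rightarrow> (nat \<Rightarrow> nat) \<Rightarrow> nat \<Rightarrow> nat" where
  "tau s b i = (LEAST k. 1 \<le> k \<and> k < Bhat s b i \<and> [b i ^ k = 1] (mod Bhat s b i))"

definition tau_k :: "nat \<Rightarrow> (nat \<Rightarrow> nat) \<Rightarrow> (nat \<Rightarrow> nat) \<Rightarrow> nat \<Rightarrow> nat" where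
  "tau_k s b k = (\<lambda>i. tau s b i * k i)"

definition tau_l :: "nat \<Rightarrow> (nat \<Rightarrow> nat) \<Rightarrow> nat \<Rightarrow> nat \<Rightarrow> nat" where
  "tau_l s b l = (\<lambda>i. tau s b i * l)"

definition Acoef :: "nat \<Rightarrow> (nat \<Rightarrow> nat) \<Rightarrow> (nat \<Rightarrow> (nat \<Rightarrow> nat) \<Rightarrow> int) \<Rightarrow> (nat \<Rightarrow> nat) \<Rightarrow> int" where
  "Acoef s b M k =
     (let r = tau_k s b k in
      (- (\<Sum>i<s. M i r * int (Bvec s b r div b i))) mod int (Bvec s b r))"

definition ytil :: "nat \<Rightarrow> (nat \<Rightarrow> nat) \<Rightarrow> (nat \<Rightarrow> (nat \<Rightarrow> nat) \<Rightarrow> int) \<Rightarrow> nat \<Rightarrow> nat" where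
  "ytil s b M m =
     (let r = tau_l s b (m + 1) in
      nat ((\<Sum>i<s. M i r * int (Bvec s b r div b i ^ r i)
                 * (\<Sum>j=1..m+1. int (b i) ^ (j * tau s b i - 1))) mod int (Bvec s b r)))"

definition ypt :: "nat \<Rightarrow> (nat \<Rightarrow> nat) \<Rightarrow> nat \<Rightarrow> nat \<Rightarrow> real" where
  "ypt s b m i = (\<Sum>j=1..m. 1 / real (b i) ^ (j * tau s b i))"

definition alpha :: "nat \<Rightarrow> (nat \<Rightarrow> nat) \<Rightarrow> (nat \<Rightarrow> (nat \<Rightarrow> nat) \<Rightarrow> int) \<Rightarrow> nat \<Rightarrow> real" where
  "alpha s b M m =
     (let BB = Bvec s b (tau_l s b m) in
      (1 / real BB) * (\<Sum>N=1..BB. discr s b (ypt s b m) (ytil s b M m) N))"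

end

theory Submission
  imports Defs "HOL-Number_Theory.Number_Theory"
begin

lemma radinv_lessThan:
  assumes b: "b \<ge> 2" and n: "n < b ^ K"
  shows "radinv b n = (\<Sum>j<K. real ((n div b ^ j) mod b) / real b ^ (j + 1))"
proof -
  have z: "real ((n div b ^ j) mod b) / real b ^ (j + 1) = 0" if "n < b ^ j" for j
    using that by simp
  have nb: "n < b ^ n"
  proof -
    have "n < 2 ^ n" by (rule less_exp)
    also have "\<dots> \<le> b ^ n" using b by (simp add: power_mono)
    finally show ?thesis .
  qed
  let ?f = "\<lambda>j. real ((n div b ^ j) mod b) / real b ^ (j + 1)"
  have "sum ?f {..n} = sum ?f {..<max (Suc n) K}"
  proof (rule sum.mono_neutral_left)
    show "\<forall>i\<in>{..<max (Suc n) K} - {..n}. ?f i = 0"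
    proof
      fix i assume "i \<in> {..<max (Suc n) K} - {..n}"
      then have "i > n" by auto
      have "b ^ n \<le> b ^ i" using b \<open>i > n\<close> by (simp add: power_increasing)
      then show "?f i = 0" using nb by (intro z) linarith
    qed
  qed auto
  also have "\<dots> = sum ?f {..<K}"
  proof (rule sum.mono_neutral_right)
    show "\<forall>i\<in>{..<max (Suc n) K} - {..<K}. ?f i = 0"
    proof
      fix i assume "i \<in> {..<max (Suc n) K} - {..<K}"
      then have "i \<ge> K" by auto
      have "b ^ K \<le> b ^ i" using b \<open>i \<ge> K\<close> by (simp add: power_increasing)
      then show "?f i = 0" using n by (intro z) linarith
    qed
  qed auto
  finally show ?thesis unfolding radinv_def .
qed

lemma radinv_rec:
  assumes b: "b \<ge> 2"
  shows "radinv b n = (real (n mod b) + radinv b (n div b)) / real b"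
proof -
  have nb: "n < b ^ n"
  proof -
    have "n < 2 ^ n" by (rule less_exp)
    also have "\<dots> \<le> b ^ n" using b by (simp add: power_mono)
    finally show ?thesis .
  qed
  have "b ^ n \<le> b ^ Suc n" using b by (intro power_increasing) auto
  then have n1: "n < b ^ Suc n" using nb by linarith
  have "n < b ^ n * b" using n1 by (metis power_Suc2)
  then have n2: "n div b < b ^ n" using b by (subst div_less_iff_less_mult) auto
  have "radinv b n = (\<Sum>j<Suc n. real ((n div b ^ j) mod b) / real b ^ (j + 1))"
    by (rule radinv_lessThan[OF b n1])
  also have "\<dots> = real (n mod b) / real b + (\<Sum>j<n. real ((n div b ^ Suc j) mod b) / real b ^ (Suc j + 1))"
    by (subst sum.lessThan_Suc_shift) simp
  also have "(\<Sum>j<n. real ((n div b ^ Suc j) mod b) / real b ^ (Suc j + 1)) = 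
     (\<Sum>j<n. real ((n div b div b ^ j) mod b) / real b ^ (j + 1)) / real b"
    unfolding sum_divide_distrib
  proof (rule sum.cong)
    fix j assume "j \<in> {..<n}"
    have "n div b ^ Suc j = n div b div b ^ j" by (simp add: div_mult2_eq power_Suc)
    moreover have "real b ^ (Suc j + 1) = real b ^ (j + 1) * real b" by simp
    ultimately show "real ((n div b ^ Suc j) mod b) / real b ^ (Suc j + 1) = real ((n div b div b ^ j) mod b) / real b ^ (j + 1) / real b"
      by simp
  qed simp
  also have "(\<Sum>j<n. real ((n div b div b ^ j) mod b) / real b ^ (j + 1)) = radinv b (n div b)"
    by (rule radinv_lessThan[OF b n2, symmetric])
  finally show ?thesis by (simp add: add_divide_distrib)
qed

lemma radinv_nonneg: "radinv b n \<ge> 0"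
  unfolding radinv_def by (intro sum_nonneg) auto

lemma radinv_less1:
  assumes b: "b \<ge> 2" shows "radinv b n < 1"
proof (induction n rule: less_induct)
  case (less n)
  show ?case
  proof (cases "n = 0")
    case True then show ?thesis by (simp add: radinv_def)
  next
    case False
    then have "n div b < n" using b by simp
    then have r: "radinv b (n div b) < 1" by (rule less.IH)
    have "n mod b < b" using b by simp
    then have "n mod b + 1 \<le> b" by linarith
    then have "real (n mod b) + 1 \<le> real b" by (metis of_nat_1 of_nat_add of_nat_le_iff)
    then have "real (n mod b) + radinv b (n div b) < real b" using r by linarith
    then show ?thesis using b by (subst radinv_rec[OF b]) simp
  qed
qed

primrec rv :: "nat \<Rightarrow> nat \<Rightarrow> nat \<Rightarrow> nat" where
  "rv b 0 n = 0"
| "rv b (Suc L) n = b ^ L * (n mod b) + rv b L (n div b)"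

lemma radinv_shift:
  assumes b: "b \<ge> 2"
  shows "radinv b n = (real (rv b L n) + radinv b (n div b ^ L)) / real b ^ L"
proof (induction L arbitrary: n)
  case 0 then show ?case by simp
next
  case (Suc L)
  have "radinv b n = (real (n mod b) + radinv b (n div b)) / real b" by (rule radinv_rec[OF b])
  also have "radinv b (n div b) = (real (rv b L (n div b)) + radinv b (n div b div b ^ L)) / real b ^ L"
    by (rule Suc.IH)
  also have "n div b div b ^ L = n div b ^ Suc L" by (simp add: div_mult2_eq power_Suc)
  finally show ?case using b by (simp add: field_simps)
qed

lemma rv_less: "b \<ge> 2 \<Longrightarrow> rv b L n < b ^ L"
proof (induction L arbitrary: n)
  case 0 then show ?case by simp
next
  case (Suc L)
  have 1: "rv b L (n div b) < b ^ L" by (rule Suc.IH[OF Suc.prems])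
  have "n mod b \<le> b - 1" using Suc.prems by (simp add: less_Suc_eq_le[symmetric])
  then have 2: "b ^ L * (n mod b) \<le> b ^ L * (b - 1)" by simp
  have 3: "b ^ L * (b - 1) + b ^ L = b ^ Suc L" using Suc.prems
    by (simp add: algebra_simps power_Suc2 diff_mult_distrib2)
  show ?case using 1 2 3 unfolding rv.simps by linarith
qed

lemma mod_Suc_split: "(n::nat) mod b ^ Suc L = b * ((n div b) mod b ^ L) + n mod b"
  by (simp add: power_Suc mod_mult2_eq)

lemma rv_0: "b \<ge> 2 \<Longrightarrow> rv b L n = 0 \<longleftrightarrow> n mod b ^ L = 0"
proof (induction L arbitrary: n)
  case 0 then show ?case by simp
next
  case (Suc L)
  have "rv b (Suc L) n = 0 \<longleftrightarrow> n mod b = 0 \<and> rv b L (n div b) = 0"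
    using Suc.prems by simp
  also have "\<dots> \<longleftrightarrow> n mod b = 0 \<and> (n div b) mod b ^ L = 0" using Suc.IH[OF Suc.prems] by simp
  also have "\<dots> \<longleftrightarrow> n mod b ^ Suc L = 0" using Suc.prems unfolding mod_Suc_split by auto
  finally show ?case .
qed

lemma rv_1: "b \<ge> 2 \<Longrightarrow> L \<ge> 1 \<Longrightarrow> rv b L n = 1 \<longleftrightarrow> n mod b ^ L = b ^ (L - 1)"
proof (induction L arbitrary: n)
  case 0 then show ?case by simp
next
  case (Suc L)
  show ?case
  proof (cases "L = 0")
    case True then show ?thesis by simp
  next
    case False
    have "b ^ 1 \<le> b ^ L" using Suc.prems False by (intro power_increasing) auto
    then have bL: "b ^ L \<ge> 2" using Suc.prems by simp
    have "rv b (Suc L) n = 1 \<longleftrightarrow> n mod b = 0 \<and> rv b L (n div b) = 1"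
    proof
      assume h: "rv b (Suc L) n = 1"
      then have "b ^ L * (n mod b) + rv b L (n div b) = 1" by simp
      then have "n mod b = 0"
      proof (rule contrapos_pp)
        assume "n mod b \<noteq> 0"
        then have "b ^ L * 1 \<le> b ^ L * (n mod b)" by (intro mult_le_mono2) simp
        then show "b ^ L * (n mod b) + rv b L (n div b) \<noteq> 1" using bL by linarith
      qed
      with h show "n mod b = 0 \<and> rv b L (n div b) = 1" by simp
    qed simp
    also have "\<dots> \<longleftrightarrow> n mod b = 0 \<and> (n div b) mod b ^ L = b ^ (L - 1)"
      using Suc.IH[OF Suc.prems(1)] False by simp
    also have "\<dots> \<longleftrightarrow> n mod b ^ Suc L = b ^ (Suc L - 1)"
    proof -
      have e: "b ^ (Suc L - 1) = b * b ^ (L - 1) + 0" using False by (cases L) auto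
      have "n mod b < b" using Suc.prems by simp
      show ?thesis unfolding mod_Suc_split e
      proof
        assume h: "b * (n div b mod b ^ L) + n mod b = b * b ^ (L - 1) + 0"
        have "(b * (n div b mod b ^ L) + n mod b) mod b = n mod b" by simp
        then have m: "n mod b = 0" using h by simp
        with h show "n mod b = 0 \<and> n div b mod b ^ L = b ^ (L - 1)" using Suc.prems by simp
      qed simp
    qed
    finally show ?thesis .
  qed
qed

definition cz :: "nat \<Rightarrow> nat \<Rightarrow> nat \<Rightarrow> nat" where
  "cz b t k = (\<Sum>j<k. b ^ ((j + 1) * t - 1))"

lemma cz_Suc: "t \<ge> 1 \<Longrightarrow> cz b t (Suc k) = b ^ (t - 1) + b ^ t * cz b t k"
proof -
  assume t: "t \<ge> 1"
  have "cz b t (Suc k) = b ^ (t - 1) + (\<Sum>j<k. b ^ ((Suc j + 1) * t - 1))"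
    unfolding cz_def by (subst sum.lessThan_Suc_shift) simp
  also have "(\<Sum>j<k. b ^ ((Suc j + 1) * t - 1)) = (\<Sum>j<k. b ^ t * b ^ ((j + 1) * t - 1))"
  proof (rule sum.cong)
    fix j assume "j \<in> {..<k}"
    have "(Suc j + 1) * t - 1 = t + ((j + 1) * t - 1)" using t by (simp add: algebra_simps)
    then show "b ^ ((Suc j + 1) * t - 1) = b ^ t * b ^ ((j + 1) * t - 1)" by (simp add: power_add)
  qed simp
  finally show ?thesis unfolding cz_def by (simp add: sum_distrib_left)
qed

lemma cz_less: "b \<ge> 2 \<Longrightarrow> t \<ge> 1 \<Longrightarrow> cz b t k < b ^ (k * t)"
proof (induction k)
  case 0 then show ?case by (simp add: cz_def)
next
  case (Suc k)
  have h: "cz b t k + 1 \<le> b ^ (k * t)" using Suc by simp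
  have p: "b ^ (t - 1) < b ^ t" using Suc.prems by (intro power_strict_increasing) auto
  have "cz b t (Suc k) = b ^ (t - 1) + b ^ t * cz b t k" by (rule cz_Suc[OF Suc.prems(2)])
  also have "\<dots> < b ^ t + b ^ t * cz b t k" using p by simp
  also have "\<dots> = b ^ t * (cz b t k + 1)" by (simp add: algebra_simps)
  also have "\<dots> \<le> b ^ t * b ^ (k * t)" using h by (intro mult_le_mono2)
  also have "\<dots> = b ^ (Suc k * t)" by (simp add: power_add)
  finally show ?case .
qed

definition yy :: "nat \<Rightarrow> nat \<Rightarrow> nat \<Rightarrow> real" where
  "yy b t m = (\<Sum>j<m. 1 / real b ^ ((j + 1) * t))"

lemma yy_Suc: "yy b t (Suc m) = (1 + yy b t m) / real b ^ t"
proof -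
  have "yy b t (Suc m) = 1 / real b ^ t + (\<Sum>j<m. 1 / real b ^ ((Suc j + 1) * t))"
    unfolding yy_def by (subst sum.lessThan_Suc_shift) simp
  also have "(\<Sum>j<m. 1 / real b ^ ((Suc j + 1) * t)) = (\<Sum>j<m. 1 / real b ^ ((j + 1) * t)) / real b ^ t"
    unfolding sum_divide_distrib by (rule sum.cong) (simp_all add: power_add algebra_simps)
  finally show ?thesis unfolding yy_def by (simp add: add_divide_distrib)
qed

lemma yy_nonneg: "yy b t m \<ge> 0"
  unfolding yy_def by (intro sum_nonneg) auto

lemma yy_less1: "b \<ge> 2 \<Longrightarrow> t \<ge> 1 \<Longrightarrow> yy b t m < 1"
proof (induction m)
  case 0 then show ?case by (simp add: yy_def)
next
  case (Suc m)
  have b1: "(2::real) \<le> real b" using Suc.prems by simp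
  have "real b ^ 1 \<le> real b ^ t" using b1 Suc.prems(2) by (intro power_increasing) auto
  then have "real b \<le> real b ^ t" by (simp only: power_one_right)
  then have bt: "real b ^ t \<ge> 2" using b1 by linarith
  have "1 + yy b t m < 2" using Suc by simp
  moreover have "real b ^ t > 0" using bt by linarith
  ultimately show ?case using bt unfolding yy_Suc by (subst divide_less_eq_1_pos) linarith+
qed

lemma uniq_repr:
  fixes c x x' y y' :: nat
  assumes "x < c" "x' < c" "c * y + x = c * y' + x'"
  shows "x = x' \<and> y = y'"
proof -
  have "x = (c * y + x) mod c" using assms(1) by simp
  also have "\<dots> = (c * y' + x') mod c" using assms(3) by simp
  also have "\<dots> = x'" using assms(2) by simp
  finally have 1: "x = x'" .
  then show ?thesis using assms by simp
qed

lemma indicator_yy: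
  assumes b: "b \<ge> 2" and t: "t \<ge> 1"
  shows "(if radinv b n < yy b t m then 1 else 0 :: real) =
         (\<Sum>k<m. if n mod b ^ ((k + 1) * t) = cz b t k then 1 else 0)"
proof (induction m arbitrary: n)
  case 0 then show ?case using radinv_nonneg[of b n] by (simp add: yy_def)
next
  case (Suc m)
  define q where "q = n div b ^ t"
  define u where "u = rv b t n"
  have bt: "real b ^ t > 0" using b by simp
  have rn: "radinv b n = (real u + radinv b q) / real b ^ t"
    unfolding u_def q_def by (rule radinv_shift[OF b])
  have L: "radinv b n < yy b t (Suc m) \<longleftrightarrow> real u + radinv b q < 1 + yy b t m"
    unfolding rn yy_Suc using bt by (simp add: divide_less_cancel)
  have split: "n mod b ^ ((Suc k + 1) * t) = cz b t (Suc k) \<longleftrightarrow>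
      n mod b ^ t = b ^ (t - 1) \<and> q mod b ^ ((k + 1) * t) = cz b t k" for k
  proof -
    have e1: "n mod b ^ ((Suc k + 1) * t) = b ^ t * (q mod b ^ ((k + 1) * t)) + n mod b ^ t"
    proof -
      have "(Suc k + 1) * t = t + (k + 1) * t" by simp
      then have "b ^ ((Suc k + 1) * t) = b ^ t * b ^ ((k + 1) * t)" by (simp only: power_add)
      then show ?thesis unfolding q_def by (simp only: mod_mult2_eq)
    qed
    have e2: "cz b t (Suc k) = b ^ t * cz b t k + b ^ (t - 1)" using cz_Suc[OF t] by simp
    have l1: "n mod b ^ t < b ^ t" using b by simp
    have l2: "b ^ (t - 1) < b ^ t" using b t by (intro power_strict_increasing) auto
    show ?thesis unfolding e1 e2
    proof
      assume h: "b ^ t * (q mod b ^ ((k + 1) * t)) + n mod b ^ t = b ^ t * cz b t k + b ^ (t - 1)"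
      show "n mod b ^ t = b ^ (t - 1) \<and> q mod b ^ ((k + 1) * t) = cz b t k"
        using uniq_repr[OF l1 l2 h] by blast
    qed simp
  qed
  have R: "(\<Sum>k<Suc m. if n mod b ^ ((k + 1) * t) = cz b t k then 1 else 0 :: real) =
     (if n mod b ^ t = 0 then 1 else 0) + (if n mod b ^ t = b ^ (t - 1) then 1 else 0) *
       (\<Sum>k<m. if q mod b ^ ((k + 1) * t) = cz b t k then 1 else 0)"
  proof -
    have a: "(\<Sum>k<Suc m. if n mod b ^ ((k + 1) * t) = cz b t k then 1 else 0 :: real) =
       (if n mod b ^ ((0 + 1) * t) = cz b t 0 then 1 else 0) + 
       (\<Sum>k<m. if n mod b ^ ((Suc k + 1) * t) = cz b t (Suc k) then 1 else 0)"
      by (rule sum.lessThan_Suc_shift)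
    have c: "(\<Sum>k<m. if n mod b ^ ((Suc k + 1) * t) = cz b t (Suc k) then 1 else 0 :: real) =
       (\<Sum>k<m. (if n mod b ^ t = b ^ (t - 1) then 1 else 0) * (if q mod b ^ ((k + 1) * t) = cz b t k then 1 else 0))"
    proof (rule sum.cong)
      fix k assume "k \<in> {..<m}"
      have "(if n mod b ^ ((Suc k + 1) * t) = cz b t (Suc k) then 1 else 0 :: real) =
         (if n mod b ^ t = b ^ (t - 1) \<and> q mod b ^ ((k + 1) * t) = cz b t k then 1 else 0)"
        by (simp only: split)
      then show "(if n mod b ^ ((Suc k + 1) * t) = cz b t (Suc k) then 1 else 0 :: real) =
         (if n mod b ^ t = b ^ (t - 1) then 1 else 0) * (if q mod b ^ ((k + 1) * t) = cz b t k then 1 else 0)"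
        by simp
    qed simp
    show ?thesis unfolding a c by (simp add: cz_def sum_distrib_left)
  qed
  have IH: "(if radinv b q < yy b t m then 1 else 0 :: real) =
         (\<Sum>k<m. if q mod b ^ ((k + 1) * t) = cz b t k then 1 else 0)" by (rule Suc.IH)
  have r0: "0 \<le> radinv b q" "radinv b q < 1" using radinv_nonneg radinv_less1[OF b] by auto
  have y0: "0 \<le> yy b t m" "yy b t m < 1" using yy_nonneg yy_less1[OF b t] by auto
  have bt1: "b ^ (t - 1) \<noteq> 0" using b by simp
  show ?case
  proof (cases "u = 0")
    case True
    then have "n mod b ^ t = 0" using rv_0[OF b] u_def by simp
    then show ?thesis unfolding R L using True r0 y0 bt1 b by simp
  next
    case u0: False
    show ?thesis
    proof (cases "u = 1")
      case True
      then have m1: "n mod b ^ t = b ^ (t - 1)" using rv_1[OF b t] u_def by simp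
      then show ?thesis unfolding R L IH[symmetric] using True bt1 by simp
    next
      case False
      then have "u \<ge> 2" using u0 by simp
      then have "real u \<ge> 2" by simp
      then have nl: "\<not> (real u + radinv b q < 1 + yy b t m)" using r0 y0 by linarith
      have "n mod b ^ t \<noteq> 0" using u0 rv_0[OF b] u_def by simp
      moreover have "n mod b ^ t \<noteq> b ^ (t - 1)" using False rv_1[OF b t] u_def by simp
      ultimately show ?thesis unfolding R L using nl by simp
    qed
  qed
qed

lemma sum_lessThan_add_split:
  "(\<Sum>j<x + (y::nat). f j) = (\<Sum>j<x. f j) + (\<Sum>j<y. f (x + j) :: 'a :: comm_monoid_add)"
  by (induction y) (simp_all add: add.assoc)

lemma sum_interval_shift: "(\<Sum>n\<in>{a..<a + (N::nat)}. f n) = (\<Sum>j<N. f (a + j) :: 'a :: comm_monoid_add)"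
proof (induction N)
  case 0 then show ?case by simp
next
  case (Suc N)
  have "(\<Sum>n\<in>{a..<a + Suc N}. f n) = (\<Sum>n\<in>{a..<a + N}. f n) + f (a + N)"
    by (simp add: sum.atLeastLessThan_Suc)
  then show ?case using Suc by simp
qed

lemma sum_triangle:
  "(\<Sum>N\<in>{1..P}. \<Sum>j<N. h j) = (\<Sum>j<P. (real P - real j) * h j)"
proof (induction P)
  case 0 then show ?case by simp
next
  case (Suc P)
  have "(\<Sum>N\<in>{1..Suc P}. \<Sum>j<N. h j) = (\<Sum>N\<in>{1..P}. \<Sum>j<N. h j) + (\<Sum>j<Suc P. h j)"
    by simp
  also have "\<dots> = (\<Sum>j<P. (real P - real j) * h j) + (\<Sum>j<Suc P. h j)" using Suc by simp
  also have "(\<Sum>j<P. (real P - real j) * h j) = (\<Sum>j<Suc P. (real P - real j) * h j)" by simp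
  also have "(\<Sum>j<Suc P. (real P - real j) * h j) + (\<Sum>j<Suc P. h j) =
      (\<Sum>j<Suc P. (real (Suc P) - real j) * h j)"
    by (simp add: sum.distrib[symmetric] algebra_simps)
  finally show ?case .
qed

lemma double_sum_real: "2 * (\<Sum>j<Q. real j) = real Q * (real Q - 1)"
  by (induction Q) (simp_all add: algebra_simps)

lemma avg_sawtooth:
  fixes Q R A a :: nat
  assumes Q: "Q > 0" and A: "A < Q" and R: "R > 0"
  shows "(1 / real (Q * R)) * (\<Sum>N\<in>{1..Q * R}. \<Sum>n\<in>{a..<a + N}.
            ((if n mod Q = (a + A) mod Q then 1 else 0) - 1 / real Q)) =
         1 / 2 - real A / real Q - 1 / (2 * real Q)"
proof -
  define h where "h j = (if j mod Q = A then 1 else 0) - 1 / real Q" for j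
  have hq: "h (Q * r + j) = h j" for r j unfolding h_def by simp
  have e1: "(if (a + j) mod Q = (a + A) mod Q then 1 else 0) - 1 / real Q = h j" for j
  proof -
    have "(a + j) mod Q = (a + A) mod Q \<longleftrightarrow> j mod Q = A"
      using cong_add_lcancel_nat[of a j A Q] A unfolding cong_def by simp
    then show ?thesis unfolding h_def by simp
  qed
  have s0: "(\<Sum>j<Q. h j) = 0"
  proof -
    have "(\<Sum>j<Q. (if j mod Q = A then 1 else 0 :: real)) = (\<Sum>j<Q. (if j = A then 1 else 0))"
      by (rule sum.cong) simp_all
    also have "\<dots> = 1" using A by simp
    finally show ?thesis unfolding h_def using Q by (simp add: sum_subtractf)
  qed
  have sR: "(\<Sum>j<Q * r. h j) = 0" for r
  proof (induction r)
    case 0 then show ?case by simp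
  next
    case (Suc r)
    have qs: "Q * Suc r = Q * r + Q" by simp
    have "(\<Sum>j<Q * Suc r. h j) = (\<Sum>j<Q * r. h j) + (\<Sum>j<Q. h (Q * r + j))"
      unfolding qs by (rule sum_lessThan_add_split)
    then show ?case using Suc s0 hq by simp
  qed
  define G where "G = (\<Sum>j<Q. (real Q - real j) * h j)"
  have F: "(\<Sum>j<Q * r. (real (Q * r) - real j) * h j) = real r * G" for r
  proof (induction r)
    case 0 then show ?case by simp
  next
    case (Suc r)
    have qs: "Q * Suc r = Q * r + Q" by simp
    have "(\<Sum>j<Q * Suc r. (real (Q * Suc r) - real j) * h j) =
       (\<Sum>j<Q * r. (real (Q * Suc r) - real j) * h j) + (\<Sum>j<Q. (real (Q * Suc r) - real (Q * r + j)) * h (Q * r + j))"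
      unfolding qs by (rule sum_lessThan_add_split)
    also have "(\<Sum>j<Q * r. (real (Q * Suc r) - real j) * h j) =
        (\<Sum>j<Q * r. (real (Q * r) - real j) * h j) + real Q * (\<Sum>j<Q * r. h j)"
      by (simp add: sum_distrib_left sum.distrib[symmetric] algebra_simps)
    also have "(\<Sum>j<Q. (real (Q * Suc r) - real (Q * r + j)) * h (Q * r + j)) = G"
      unfolding G_def hq by (rule sum.cong) (simp_all add: algebra_simps)
    finally show ?case using Suc sR by (simp add: algebra_simps)
  qed
  have G: "G = real Q - real A - (real Q + 1) / 2"
  proof -
    have "G = (\<Sum>j<Q. (real Q - real j) * (if j = A then 1 else 0) - (real Q - real j) / real Q)"
      unfolding G_def h_def by (rule sum.cong) (simp_all add: right_diff_distrib)
    also have "\<dots> = (\<Sum>j<Q. (real Q - real j) * (if j = A then 1 else 0)) - (\<Sum>j<Q. (real Q - real j)) / real Q"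
      by (subst sum_subtractf) (simp only: sum_divide_distrib)
    also have "(\<Sum>j<Q. (real Q - real j) * (if j = A then 1 else 0)) = real Q - real A"
      using A by (simp add: if_distrib cong: if_cong)
    also have "(\<Sum>j<Q. (real Q - real j)) = real Q * real Q - (\<Sum>j<Q. real j)"
      by (simp add: sum_subtractf)
    also have "\<dots> = real Q * (real Q + 1) / 2" using double_sum_real[of Q] by (simp add: algebra_simps)
    finally have g: "G = real Q - real A - real Q * (real Q + 1) / 2 / real Q" .
    have "real Q * (real Q + 1) / 2 / real Q = (real Q + 1) / 2" using Q by simp
    then show ?thesis using g by simp
  qed
  have "(\<Sum>N\<in>{1..Q * R}. \<Sum>n\<in>{a..<a + N}. ((if n mod Q = (a + A) mod Q then 1 else 0) - 1 / real Q))
      = (\<Sum>N\<in>{1..Q * R}. \<Sum>j<N. h j)"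
    by (simp only: sum_interval_shift e1)
  also have "\<dots> = real R * G" using sum_triangle[of h "Q * R"] F[of R] by simp
  finally have S: "(\<Sum>N\<in>{1..Q * R}. \<Sum>n\<in>{a..<a + N}. ((if n mod Q = (a + A) mod Q then 1 else 0) - 1 / real Q))
      = real R * (real Q - real A - (real Q + 1) / 2)" unfolding G .
  show ?thesis unfolding S using Q R by (simp add: field_simps)
qed

lemma prod_pow_div_self:
  fixes f :: "nat \<Rightarrow> nat"
  assumes "finite I" "i \<in> I" "f i > 0"
  shows "(\<Prod>j\<in>I. f j ^ e j) div f i ^ e i = (\<Prod>j\<in>I-{i}. f j ^ e j)"
  using assms by (simp add: prod.remove[OF assms(1,2)])

lemma prod_pow_div_base:
  fixes f :: "nat \<Rightarrow> nat"
  assumes "finite I" "i \<in> I" "f i > 0" "e i \<ge> 1"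
  shows "(\<Prod>j\<in>I. f j ^ e j) div f i = f i ^ (e i - 1) * (\<Prod>j\<in>I-{i}. f j ^ e j)"
proof -
  have p: "f i ^ e i = f i * f i ^ (e i - 1)" using assms(4) by (cases "e i") auto
  have "(\<Prod>j\<in>I. f j ^ e j) = f i * (f i ^ (e i - 1) * (\<Prod>j\<in>I-{i}. f j ^ e j))"
    by (simp add: prod.remove[OF assms(1,2)] p)
  then show ?thesis using assms(3) by simp
qed

lemma Bhat_eq: "i < s \<Longrightarrow> (\<forall>j<s. b j > 0) \<Longrightarrow> Bhat s b i = (\<Prod>j\<in>{..<s}-{i}. b j)"
  unfolding Bhat_def by (simp add: prod.remove[of "{..<s}" i])

lemma tau_pos:
  assumes s: "s \<ge> 2" and b: "\<And>i. i < s \<Longrightarrow> b i \<ge> 2"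
    and cop: "\<And>i j. i < s \<Longrightarrow> j < s \<Longrightarrow> i \<noteq> j \<Longrightarrow> coprime (b i) (b j)"
    and i: "i < s"
  shows "tau s b i \<ge> 1"
proof -
  define Bh where "Bh = Bhat s b i"
  have bpos: "b j > 0" if "j < s" for j using b[OF that] by simp
  have Bh: "Bh = (\<Prod>j\<in>{..<s}-{i}. b j)" unfolding Bh_def using bpos i
    by (intro Bhat_eq) auto
  have "\<exists>j0. j0 \<in> {..<s}-{i}"
  proof (cases "i = 0")
    case True then show ?thesis using s by (intro exI[of _ 1]) auto
  next
    case False then show ?thesis using s by (intro exI[of _ 0]) auto
  qed
  then obtain j0 where j0: "j0 \<in> {..<s}-{i}" by blast
  have "b j0 dvd Bh" unfolding Bh using j0 by (intro dvd_prodI) auto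
  moreover have "Bh > 0" unfolding Bh using bpos by (intro prod_pos) auto
  ultimately have "b j0 \<le> Bh" by (rule dvd_imp_le)
  moreover have "b j0 \<ge> 2" using j0 b by auto
  ultimately have Bh2: "Bh \<ge> 2" by simp
  have "coprime (b i) Bh" unfolding Bh using cop i by (intro prod_coprime_right) auto
  then have e: "[b i ^ totient Bh = 1] (mod Bh)" by (rule euler_theorem)
  have "totient Bh < Bh" using Bh2 by (intro totient_less) simp
  moreover have "totient Bh \<ge> 1" using Bh2 totient_gt_0_iff[of Bh] by linarith
  ultimately have P: "1 \<le> totient Bh \<and> totient Bh < Bhat s b i \<and> [b i ^ totient Bh = 1] (mod Bhat s b i)"
    using e Bh2 unfolding Bh_def by simp
  show ?thesis unfolding tau_def
    using LeastI[of "\<lambda>k. 1 \<le> k \<and> k < Bhat s b i \<and> [b i ^ k = 1] (mod Bhat s b i)" "totient Bh", OF P] by blast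
qed

lemma ytil_cong:
  assumes b: "\<And>i. i < s \<Longrightarrow> b i \<ge> 2"
    and tpos: "\<And>i. i < s \<Longrightarrow> tau s b i \<ge> 1"
    and Mass: "\<And>r i. (\<forall>j<s. 0 < r j) \<Longrightarrow> i < s \<Longrightarrow>
           [M i r * int (Bvec s b r div b i ^ r i) = 1] (mod int (b i ^ r i))"
    and k: "k \<in> {..<s} \<rightarrow>\<^sub>E {1..m}" and i: "i < s"
  shows "[int (ytil s b M m) = int (cz (b i) (tau s b i) (k i - 1)) + int (b i) ^ (tau s b i * k i - 1)]
           (mod int (b i ^ (tau s b i * k i)))"
proof -
  define t where "t = tau s b i"
  define r' where "r' = tau_l s b (m + 1)"
  define B' where "B' = Bvec s b r'"
  define p where "p = int (b i ^ (t * k i))"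
  define S where "S l = (\<Sum>j=1..m+1. int (b l) ^ (j * tau s b l - 1))" for l
  define T where "T l = M l r' * int (B' div b l ^ r' l) * S l" for l
  define X where "X = (\<Sum>l<s. T l)"
  have bpos: "b j > 0" if "j < s" for j using b[OF that] by simp
  have "k i \<in> {1..m}" using PiE_mem[OF k] i by simp
  then have ki: "1 \<le> k i" "k i \<le> m" by simp_all
  have t1: "t \<ge> 1" unfolding t_def using tpos i .
  have B'pos: "B' > 0" unfolding B'_def Bvec_def using bpos by (intro prod_pos) auto
  have yt: "int (ytil s b M m) = X mod int B'"
    unfolding ytil_def Let_def X_def T_def S_def B'_def r'_def using B'pos[unfolded B'_def r'_def]
    by simp
  have r'i: "r' i = t * (m + 1)" unfolding r'_def tau_l_def t_def by simp
  have tk: "t * k i \<le> t * (m + 1)" using ki by (intro mult_le_mono2) simp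
  have hp1: "p dvd int (b i ^ r' i)" unfolding p_def r'i using tk
    by (intro of_nat_dvd_iff[THEN iffD2] le_imp_power_dvd)
  have hp2: "int (b i ^ r' i) dvd int B'" unfolding B'_def Bvec_def using i
    by (intro of_nat_dvd_iff[THEN iffD2] dvd_prodI) auto
  have c1: "[int (ytil s b M m) = X] (mod p)" unfolding yt
    using cong_dvd_modulus[OF _ dvd_trans[OF hp1 hp2], of "X mod int B'" X] by simp
  have c2: "[X = T i] (mod p)"
  proof -
    have "X = T i + (\<Sum>l\<in>{..<s}-{i}. T l)" unfolding X_def using i by (simp add: sum.remove)
    moreover have "p dvd (\<Sum>l\<in>{..<s}-{i}. T l)"
    proof (rule dvd_sum)
      fix l assume l: "l \<in> {..<s}-{i}"
      have "B' div b l ^ r' l = (\<Prod>j\<in>{..<s}-{l}. b j ^ r' j)"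
        unfolding B'_def Bvec_def using l bpos by (intro prod_pow_div_self) auto
      moreover have "b i ^ r' i dvd (\<Prod>j\<in>{..<s}-{l}. b j ^ r' j)" using l i by (intro dvd_prodI) auto
      ultimately have "b i ^ r' i dvd B' div b l ^ r' l" by simp
      then have "int (b i ^ r' i) dvd int (B' div b l ^ r' l)" by (rule of_nat_dvd_iff[THEN iffD2])
      then have "p dvd int (B' div b l ^ r' l)" using hp1 by (rule dvd_trans[rotated])
      then show "p dvd T l" unfolding T_def by simp
    qed
    ultimately show ?thesis by (simp only:) (rule cong_add_lcancel_0[THEN iffD2], rule cong_0_iff[THEN iffD2])
  qed
  have c3: "[T i = S i] (mod p)"
  proof -
    have "\<forall>j<s. 0 < r' j" unfolding r'_def tau_l_def using tpos by (simp add: Suc_le_eq)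
    then have "[M i r' * int (B' div b i ^ r' i) = 1] (mod int (b i ^ r' i))"
      unfolding B'_def using Mass i by blast
    then have "[M i r' * int (B' div b i ^ r' i) * S i = 1 * S i] (mod int (b i ^ r' i))"
      by (rule cong_mult) simp
    then show ?thesis unfolding T_def using cong_dvd_modulus[OF _ hp1] by simp
  qed
  have c4: "[S i = int (cz (b i) t (k i - 1)) + int (b i) ^ (t * k i - 1)] (mod p)"
  proof -
    define f where "f j = int (b i) ^ (Suc j * t - 1)" for j
    have "S i = (\<Sum>j<m+1. f j)" unfolding S_def f_def t_def
      using sum.atLeast1_atMost_eq[of "\<lambda>j. int (b i) ^ (j * tau s b i - 1)" "m+1"] by simp
    also have "m + 1 = k i + (m + 1 - k i)" using ki by simp
    also have "(\<Sum>j<k i + (m + 1 - k i). f j) = (\<Sum>j<k i. f j) + (\<Sum>j<m + 1 - k i. f (k i + j))"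
      by (rule sum_lessThan_add_split)
    also have "(\<Sum>j<k i. f j) = (\<Sum>j<k i - 1. f j) + f (k i - 1)"
    proof -
      obtain q where q: "k i = Suc q" using ki by (cases "k i") auto
      show ?thesis unfolding q by simp
    qed
    also have "(\<Sum>j<k i - 1. f j) = int (cz (b i) t (k i - 1))"
      unfolding cz_def f_def by (simp add: of_nat_sum)
    also have "f (k i - 1) = int (b i) ^ (t * k i - 1)" unfolding f_def using ki by (simp add: mult.commute)
    finally have Se: "S i = int (cz (b i) t (k i - 1)) + int (b i) ^ (t * k i - 1) + (\<Sum>j<m + 1 - k i. f (k i + j))"
      by simp
    have "p dvd (\<Sum>j<m + 1 - k i. f (k i + j))"
    proof (rule dvd_sum)
      fix j
      have "t * k i \<le> Suc (k i + j) * t - 1" using t1 by (simp add: algebra_simps)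
      then show "p dvd f (k i + j)" unfolding p_def f_def of_nat_power by (rule le_imp_power_dvd)
    qed
    then show ?thesis unfolding Se by (rule cong_add_lcancel_0[THEN iffD2, OF cong_0_iff[THEN iffD2]])
  qed
  show ?thesis using cong_trans[OF c1 cong_trans[OF c2 cong_trans[OF c3 c4]]] unfolding p_def t_def .
qed

lemma Acoef_cong:
  assumes b: "\<And>i. i < s \<Longrightarrow> b i \<ge> 2"
    and tpos: "\<And>i. i < s \<Longrightarrow> tau s b i \<ge> 1"
    and Mass: "\<And>r i. (\<forall>j<s. 0 < r j) \<Longrightarrow> i < s \<Longrightarrow>
           [M i r * int (Bvec s b r div b i ^ r i) = 1] (mod int (b i ^ r i))"
    and k: "k \<in> {..<s} \<rightarrow>\<^sub>E {1..m}" and i: "i < s"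
  shows "[Acoef s b M k = - (int (b i) ^ (tau s b i * k i - 1))] (mod int (b i ^ (tau s b i * k i)))"
proof -
  define r where "r = tau_k s b k"
  define Q where "Q = Bvec s b r"
  define p where "p = int (b i ^ r i)"
  define T where "T l = M l r * int (Q div b l)" for l
  define Z where "Z = (\<Sum>l<s. T l)"
  have bpos: "b j > 0" if "j < s" for j using b[OF that] by simp
  have rpos: "r j \<ge> 1" if "j < s" for j
  proof -
    have "k j \<in> {1..m}" using PiE_mem[OF k] that by simp
    then have "k j \<ge> 1" by simp
    moreover have "tau s b j \<ge> 1" using tpos that .
    ultimately show ?thesis unfolding r_def tau_k_def by simp
  qed
  have Qpos: "Q > 0" unfolding Q_def Bvec_def using bpos by (intro prod_pos) auto
  have Ae: "Acoef s b M k = (- Z) mod int Q" unfolding Acoef_def Let_def Z_def T_def Q_def r_def ..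
  have hp: "p dvd int Q" unfolding p_def Q_def Bvec_def using i
    by (intro of_nat_dvd_iff[THEN iffD2] dvd_prodI) auto
  have c1: "[Acoef s b M k = - Z] (mod p)" unfolding Ae
    using cong_dvd_modulus[OF _ hp, of "(- Z) mod int Q" "- Z"] by simp
  have c2: "[Z = T i] (mod p)"
  proof -
    have "Z = T i + (\<Sum>l\<in>{..<s}-{i}. T l)" unfolding Z_def using i by (simp add: sum.remove)
    moreover have "p dvd (\<Sum>l\<in>{..<s}-{i}. T l)"
    proof (rule dvd_sum)
      fix l assume l: "l \<in> {..<s}-{i}"
      have "Q div b l = b l ^ (r l - 1) * (\<Prod>j\<in>{..<s}-{l}. b j ^ r j)"
        unfolding Q_def Bvec_def using l bpos rpos by (intro prod_pow_div_base) auto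
      moreover have "b i ^ r i dvd (\<Prod>j\<in>{..<s}-{l}. b j ^ r j)" using l i by (intro dvd_prodI) auto
      ultimately have "b i ^ r i dvd Q div b l" by simp
      then have "p dvd int (Q div b l)" unfolding p_def by (rule of_nat_dvd_iff[THEN iffD2])
      then show "p dvd T l" unfolding T_def by simp
    qed
    ultimately show ?thesis by (simp only:) (rule cong_add_lcancel_0[THEN iffD2], rule cong_0_iff[THEN iffD2])
  qed
  have c3: "[T i = int (b i) ^ (r i - 1)] (mod p)"
  proof -
    have d1: "Q div b i = b i ^ (r i - 1) * (\<Prod>j\<in>{..<s}-{i}. b j ^ r j)"
      unfolding Q_def Bvec_def using i bpos rpos by (intro prod_pow_div_base) auto
    have d2: "Q div b i ^ r i = (\<Prod>j\<in>{..<s}-{i}. b j ^ r j)"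
      unfolding Q_def Bvec_def using i bpos by (intro prod_pow_div_self) auto
    have Te: "T i = M i r * int (Q div b i ^ r i) * int (b i) ^ (r i - 1)"
      unfolding T_def d1 d2 by (simp add: algebra_simps)
    have "\<forall>j<s. 0 < r j" using rpos by (simp add: Suc_le_eq)
    then have "[M i r * int (Q div b i ^ r i) = 1] (mod p)"
      unfolding Q_def p_def using Mass i by blast
    then have "[M i r * int (Q div b i ^ r i) * int (b i) ^ (r i - 1) = 1 * int (b i) ^ (r i - 1)] (mod p)"
      by (rule cong_mult) simp
    then show ?thesis unfolding Te by simp
  qed
  have "[Acoef s b M k = - (int (b i) ^ (r i - 1))] (mod p)"
    using cong_trans[OF c1 cong_uminus[OF cong_trans[OF c2 c3]]] .
  then show ?thesis unfolding p_def r_def tau_k_def .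
qed

lemma combined_mod:
  assumes b: "\<And>i. i < s \<Longrightarrow> b i \<ge> 2"
    and tpos: "\<And>i. i < s \<Longrightarrow> tau s b i \<ge> 1"
    and Mass: "\<And>r i. (\<forall>j<s. 0 < r j) \<Longrightarrow> i < s \<Longrightarrow>
           [M i r * int (Bvec s b r div b i ^ r i) = 1] (mod int (b i ^ r i))"
    and k: "k \<in> {..<s} \<rightarrow>\<^sub>E {1..m}" and i: "i < s"
  shows "(ytil s b M m + nat (Acoef s b M k)) mod (b i ^ (tau s b i * k i)) = cz (b i) (tau s b i) (k i - 1)"
proof -
  define t where "t = tau s b i"
  have t1: "t \<ge> 1" unfolding t_def using tpos i .
  have "k i \<in> {1..m}" using PiE_mem[OF k] i by simp
  then have ki: "1 \<le> k i" by simp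
  have bpos: "b j > 0" if "j < s" for j using b[OF that] by simp
  have Qpos: "Bvec s b (tau_k s b k) > 0" unfolding Bvec_def using bpos by (intro prod_pos) auto
  have A0: "Acoef s b M k \<ge> 0" unfolding Acoef_def Let_def using Qpos by simp
  have c: "[int (ytil s b M m) + Acoef s b M k = int (cz (b i) t (k i - 1)) + int (b i) ^ (t * k i - 1)
           + - (int (b i) ^ (t * k i - 1))] (mod int (b i ^ (t * k i)))"
    unfolding t_def by (rule cong_add[OF ytil_cong[OF b tpos Mass k i] Acoef_cong[OF b tpos Mass k i]])
  have "int (ytil s b M m + nat (Acoef s b M k)) = int (ytil s b M m) + Acoef s b M k" using A0 by simp
  with c have "[int (ytil s b M m + nat (Acoef s b M k)) = int (cz (b i) t (k i - 1))] (mod int (b i ^ (t * k i)))"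
    by simp
  then have cn: "[ytil s b M m + nat (Acoef s b M k) = cz (b i) t (k i - 1)] (mod b i ^ (t * k i))"
    by (simp only: cong_int_iff)
  have "cz (b i) t (k i - 1) < b i ^ ((k i - 1) * t)" using b[OF i] t1 by (rule cz_less)
  also have "\<dots> \<le> b i ^ (t * k i)" using b[OF i] by (intro power_increasing) (auto simp: algebra_simps)
  finally have "cz (b i) t (k i - 1) mod b i ^ (t * k i) = cz (b i) t (k i - 1)" by simp
  then show ?thesis using cn unfolding cong_def t_def by simp
qed

lemma member_iff:
  assumes b: "\<And>i. i < s \<Longrightarrow> b i \<ge> 2"
    and cop: "\<And>i j. i < s \<Longrightarrow> j < s \<Longrightarrow> i \<noteq> j \<Longrightarrow> coprime (b i) (b j)"
    and tpos: "\<And>i. i < s \<Longrightarrow> tau s b i \<ge> 1"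
    and Mass: "\<And>r i. (\<forall>j<s. 0 < r j) \<Longrightarrow> i < s \<Longrightarrow>
           [M i r * int (Bvec s b r div b i ^ r i) = 1] (mod int (b i ^ r i))"
    and k: "k \<in> {..<s} \<rightarrow>\<^sub>E {1..m}"
  shows "(\<forall>i<s. n mod (b i ^ (tau s b i * k i)) = cz (b i) (tau s b i) (k i - 1)) \<longleftrightarrow>
         n mod Bvec s b (tau_k s b k) = (ytil s b M m + nat (Acoef s b M k)) mod Bvec s b (tau_k s b k)"
proof -
  define c where "c = ytil s b M m + nat (Acoef s b M k)"
  have Q: "Bvec s b (tau_k s b k) = (\<Prod>i<s. b i ^ (tau s b i * k i))" unfolding Bvec_def tau_k_def ..
  have cm: "c mod (b i ^ (tau s b i * k i)) = cz (b i) (tau s b i) (k i - 1)" if "i < s" for i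
    unfolding c_def using combined_mod[OF b tpos Mass k that] .
  show ?thesis unfolding c_def[symmetric]
  proof
    assume h: "\<forall>i<s. n mod (b i ^ (tau s b i * k i)) = cz (b i) (tau s b i) (k i - 1)"
    have "[n = c] (mod (\<Prod>i\<in>{..<s}. b i ^ (tau s b i * k i)))"
    proof (rule coprime_cong_prod_nat)
      fix i j assume "i \<in> {..<s}" "j \<in> {..<s}" "i \<noteq> j"
      then show "coprime (b i ^ (tau s b i * k i)) (b j ^ (tau s b j * k j))"
        using cop by simp
    next
      fix i assume "i \<in> {..<s}"
      then show "[n = c] (mod b i ^ (tau s b i * k i))" using h cm unfolding cong_def by simp
    qed
    then show "n mod Bvec s b (tau_k s b k) = c mod Bvec s b (tau_k s b k)" unfolding Q cong_def .
  next
    assume h: "n mod Bvec s b (tau_k s b k) = c mod Bvec s b (tau_k s b k)"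
    show "\<forall>i<s. n mod (b i ^ (tau s b i * k i)) = cz (b i) (tau s b i) (k i - 1)"
    proof (intro allI impI)
      fix i assume i: "i < s"
      have "b i ^ (tau s b i * k i) dvd Bvec s b (tau_k s b k)" unfolding Q using i by (intro dvd_prodI) auto
      then have "[n = c] (mod b i ^ (tau s b i * k i))" using h cong_dvd_modulus_nat unfolding cong_def by blast
      then show "n mod (b i ^ (tau s b i * k i)) = cz (b i) (tau s b i) (k i - 1)"
        using cm[OF i] unfolding cong_def by simp
    qed
  qed
qed

lemma prod_indicator:
  "(if (\<forall>i<(s::nat). P i) then 1 else 0 :: real) = (\<Prod>i<s. if P i then 1 else 0)"
proof (cases "\<forall>i<s. P i")
  case True then show ?thesis by simp
next
  case False
  then obtain i where "i < s" "\<not> P i" by blast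
  then have "(\<Prod>i<s. if P i then 1 else 0 :: real) = 0" by (intro prod_zero) auto
  then show ?thesis using False by simp
qed

lemma ypt_yy: "ypt s b m i = yy (b i) (tau s b i) m"
  unfolding ypt_def yy_def using sum.atLeast1_atMost_eq[of "\<lambda>j. 1 / real (b i) ^ (j * tau s b i)" m]
  by (simp add: algebra_simps)

lemma ind_decomp:
  assumes b: "\<And>i. i < s \<Longrightarrow> b i \<ge> 2"
    and cop: "\<And>i j. i < s \<Longrightarrow> j < s \<Longrightarrow> i \<noteq> j \<Longrightarrow> coprime (b i) (b j)"
    and tpos: "\<And>i. i < s \<Longrightarrow> tau s b i \<ge> 1"
    and Mass: "\<And>r i. (\<forall>j<s. 0 < r j) \<Longrightarrow> i < s \<Longrightarrow>
           [M i r * int (Bvec s b r div b i ^ r i) = 1] (mod int (b i ^ r i))"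
  shows "(if (\<forall>i<s. 0 \<le> halton b n i \<and> halton b n i < ypt s b m i) then 1 else 0 :: real) =
    (\<Sum>k\<in>{..<s} \<rightarrow>\<^sub>E {1..m}. if n mod Bvec s b (tau_k s b k) =
        (ytil s b M m + nat (Acoef s b M k)) mod Bvec s b (tau_k s b k) then 1 else 0)"
proof -
  define g where "g i k = (if n mod (b i ^ (tau s b i * k)) = cz (b i) (tau s b i) (k - 1) then 1 else 0 :: real)" for i k
  have f: "(if radinv (b i) n < yy (b i) (tau s b i) m then 1 else 0 :: real) = (\<Sum>k\<in>{1..m}. g i k)"
    if i: "i < s" for i
  proof -
    have "(if radinv (b i) n < yy (b i) (tau s b i) m then 1 else 0 :: real) =
      (\<Sum>k<m. if n mod b i ^ ((k + 1) * tau s b i) = cz (b i) (tau s b i) k then 1 else 0)"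
      by (rule indicator_yy[OF b[OF i] tpos[OF i]])
    also have "\<dots> = (\<Sum>k\<in>{Suc 0..m}. g i k)"
      unfolding g_def using sum.atLeast1_atMost_eq[of "g i" m] by (simp add: g_def algebra_simps)
    finally show ?thesis by simp
  qed
  have "(if (\<forall>i<s. 0 \<le> halton b n i \<and> halton b n i < ypt s b m i) then 1 else 0 :: real) =
      (\<Prod>i<s. if radinv (b i) n < yy (b i) (tau s b i) m then 1 else 0)"
    unfolding prod_indicator halton_def ypt_yy using radinv_nonneg by simp
  also have "\<dots> = (\<Prod>i<s. \<Sum>k\<in>{1..m}. g i k)" by (rule prod.cong) (simp_all add: f)
  also have "\<dots> = (\<Sum>k\<in>{..<s} \<rightarrow>\<^sub>E {1..m}. \<Prod>i<s. g i (k i))" by (rule prod_sum_PiE) auto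
  also have "\<dots> = (\<Sum>k\<in>{..<s} \<rightarrow>\<^sub>E {1..m}. if n mod Bvec s b (tau_k s b k) =
        (ytil s b M m + nat (Acoef s b M k)) mod Bvec s b (tau_k s b k) then 1 else 0)"
  proof (rule sum.cong)
    fix k assume k: "k \<in> {..<s} \<rightarrow>\<^sub>E {1..m}"
    have "(\<Prod>i<s. g i (k i)) = (if (\<forall>i<s. n mod (b i ^ (tau s b i * k i)) = cz (b i) (tau s b i) (k i - 1)) then 1 else 0)"
      unfolding g_def prod_indicator ..
    then show "(\<Prod>i<s. g i (k i)) = (if n mod Bvec s b (tau_k s b k) =
        (ytil s b M m + nat (Acoef s b M k)) mod Bvec s b (tau_k s b k) then 1 else 0)"
      using member_iff[OF b cop tpos Mass k, of n] by simp
  qed simp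
  finally show ?thesis .
qed

lemma vol_decomp:
  shows "(\<Prod>i<s. ypt s b m i) = (\<Sum>k\<in>{..<s} \<rightarrow>\<^sub>E {1..m}. 1 / real (Bvec s b (tau_k s b k)))"
proof -
  have "(\<Prod>i<s. ypt s b m i) = (\<Prod>i<s. \<Sum>k\<in>{1..m}. 1 / real (b i) ^ (tau s b i * k))"
    unfolding ypt_def by (simp add: mult.commute)
  also have "\<dots> = (\<Sum>k\<in>{..<s} \<rightarrow>\<^sub>E {1..m}. \<Prod>i<s. 1 / real (b i) ^ (tau s b i * k i))"
    by (rule prod_sum_PiE) auto
  also have "\<dots> = (\<Sum>k\<in>{..<s} \<rightarrow>\<^sub>E {1..m}. 1 / real (Bvec s b (tau_k s b k)))"
    by (rule sum.cong) (simp_all add: Bvec_def tau_k_def prod_dividef of_nat_prod)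
  finally show ?thesis .
qed

theorem lemma4p4:
  fixes s m :: nat and b :: "nat \<Rightarrow> nat" and M :: "nat \<Rightarrow> (nat \<Rightarrow> nat) \<Rightarrow> int"
  assumes "s \<ge> 2"
    and "\<And>i. i < s \<Longrightarrow> b i \<ge> 2"
    and "\<And>i j. i < s \<Longrightarrow> j < s \<Longrightarrow> i \<noteq> j \<Longrightarrow> coprime (b i) (b j)"
    and "m \<ge> (\<Prod>i<s. b i)"
    and "\<And>r i. (\<forall>j<s. 0 < r j) \<Longrightarrow> i < s \<Longrightarrow>
           [M i r * int (Bvec s b r div b i ^ r i) = 1] (mod int (b i ^ r i))"
  shows "alpha s b M m =
    (\<Sum>k\<in>{..<s} \<rightarrow>\<^sub>E {1..m}.
       1 / 2 - real_of_int (Acoef s b M k) / real (Bvec s b (tau_k s b k))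
             - 1 / (2 * real (Bvec s b (tau_k s b k))))"
proof -
  note b = assms(2) and cop = assms(3) and Mass = assms(5)
  have tpos: "tau s b i \<ge> 1" if "i < s" for i
    using tau_pos[of s b i, OF assms(1)] b cop that by blast
  have bpos: "b j > 0" if "j < s" for j using b[OF that] by simp
  define K where "K = {..<s} \<rightarrow>\<^sub>E {1..m}"
  define P where "P = Bvec s b (tau_l s b m)"
  define a where "a = ytil s b M m"
  define Q where "Q k = Bvec s b (tau_k s b k)" for k
  define A where "A k = nat (Acoef s b M k)" for k
  define I where "I k n = (if n mod Q k = (a + A k) mod Q k then 1 else 0 :: real)" for k n
  have finK: "finite K" unfolding K_def by (intro finite_PiE) auto
  have Qpos: "Q k > 0" for k unfolding Q_def Bvec_def using bpos by (intro prod_pos) auto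
  have disc: "discr s b (ypt s b m) a N = (\<Sum>k\<in>K. \<Sum>n\<in>{a..<a + N}. (I k n - 1 / real (Q k)))" for N
  proof -
    have "discr s b (ypt s b m) a N = (\<Sum>n\<in>{a..<a + N}. (\<Sum>k\<in>K. I k n) - (\<Sum>k\<in>K. 1 / real (Q k)))"
      unfolding discr_def
    proof (rule sum.cong)
      fix x
      show "(if \<forall>i<s. 0 \<le> halton b x i \<and> halton b x i < ypt s b m i then 1 else 0) - (\<Prod>i<s. ypt s b m i) =
        (\<Sum>k\<in>K. I k x) - (\<Sum>k\<in>K. 1 / real (Q k))"
      proof -
        have h: "(if \<forall>i<s. 0 \<le> halton b x i \<and> halton b x i < ypt s b m i then 1 else 0 :: real) = (\<Sum>k\<in>K. I k x)"
          unfolding K_def I_def Q_def A_def a_def by (rule ind_decomp[OF b cop tpos Mass])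
        show ?thesis unfolding h vol_decomp K_def I_def Q_def ..
      qed
    qed simp
    also have "\<dots> = (\<Sum>n\<in>{a..<a + N}. \<Sum>k\<in>K. (I k n - 1 / real (Q k)))"
      by (simp only: sum_subtractf)
    also have "\<dots> = (\<Sum>k\<in>K. \<Sum>n\<in>{a..<a + N}. (I k n - 1 / real (Q k)))"
      by (rule sum.swap)
    finally show ?thesis .
  qed
  have "alpha s b M m = 1 / real P * (\<Sum>N\<in>{1..P}. \<Sum>k\<in>K. \<Sum>n\<in>{a..<a + N}. (I k n - 1 / real (Q k)))"
    unfolding alpha_def Let_def P_def[symmetric] a_def[symmetric] disc ..
  also have "\<dots> = (\<Sum>k\<in>K. 1 / real P * (\<Sum>N\<in>{1..P}. \<Sum>n\<in>{a..<a + N}. (I k n - 1 / real (Q k))))"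
    by (simp only: sum.swap[of _ "{1..P}"] sum_distrib_left)
  also have "\<dots> = (\<Sum>k\<in>K. 1 / 2 - real_of_int (Acoef s b M k) / real (Q k) - 1 / (2 * real (Q k)))"
  proof (rule sum.cong)
    fix k assume k: "k \<in> K"
    have km: "k i \<le> m" if "i < s" for i using PiE_mem[OF k[unfolded K_def] ] that by simp
    define R where "R = (\<Prod>i<s. b i ^ (tau s b i * (m - k i)))"
    have Rpos: "R > 0" unfolding R_def using bpos by (intro prod_pos) auto
    have PQR: "P = Q k * R"
    proof -
      have "Q k * R = (\<Prod>i<s. b i ^ (tau s b i * k i) * b i ^ (tau s b i * (m - k i)))"
        unfolding Q_def R_def Bvec_def tau_k_def by (simp only: prod.distrib)
      also have "\<dots> = (\<Prod>i<s. b i ^ (tau s b i * m))"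
      proof (rule prod.cong)
        fix i assume "i \<in> {..<s}"
        then have "tau s b i * k i + tau s b i * (m - k i) = tau s b i * m" using km
          by (simp add: add_mult_distrib2[symmetric])
        then show "b i ^ (tau s b i * k i) * b i ^ (tau s b i * (m - k i)) = b i ^ (tau s b i * m)"
          by (simp only: power_add[symmetric])
      qed simp
      finally show ?thesis unfolding P_def Bvec_def tau_l_def by simp
    qed
    have A0: "Acoef s b M k \<ge> 0" "Acoef s b M k < int (Q k)"
      unfolding Acoef_def Let_def Q_def using Qpos[of k] unfolding Q_def by simp_all
    then have AQ: "A k < Q k" unfolding A_def by linarith
    have Ar: "real (A k) = real_of_int (Acoef s b M k)" unfolding A_def using A0 by simp
    have "1 / real P * (\<Sum>N\<in>{1..P}. \<Sum>n\<in>{a..<a + N}. (I k n - 1 / real (Q k))) =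
      1 / 2 - real (A k) / real (Q k) - 1 / (2 * real (Q k))"
      unfolding PQR I_def by (rule avg_sawtooth[OF Qpos AQ Rpos])
    then show "1 / real P * (\<Sum>N\<in>{1..P}. \<Sum>n\<in>{a..<a + N}. (I k n - 1 / real (Q k))) =
      1 / 2 - real_of_int (Acoef s b M k) / real (Q k) - 1 / (2 * real (Q k))" unfolding Ar .
  qed simp
  finally show ?thesis unfolding K_def Q_def .
qed

end
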